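(* If $Q$ is a quantity space over a field $K$, then every dimension $\mathsf{C}\in Q/{\sim}$ contains a non-zero unit quantity for $\mathsf{C}$.
   Context: A scalable monoid over a (unital, associative) ring $R$ is a monoid $X$ (identity $1_X$, product written $xy$) together with a map $R\times X\to X$, $(\alpha,x)\mapsto\alpha\cdot x$, such that $1\cdot x=x$, $\alpha\cdot(\beta\cdot x)=\alpha\beta\cdot x$ and $\alpha\cdot(xy)=(\alpha\cdot x)y=x(\alpha\cdot y)$. A quantity space over a field $K$ is a commutative scalable monoid $Q$ over $K$ for which there exists a basis, i.e. a finite set $\{e_1,\ldots,e_n\}$ of invertible elements of $Q$ such that every $x\in Q$ has a unique expansion $x=\mu\cdot\prod_{i=1}^n e_i^{k_i}$ with $\mu\in K$ and $k_i\in\mathbb{Z}$. On $Q$, $x\sim y$ iff $\alpha\cdot x=\beta\cdot y$ for some $\alpha,\beta\in K$; equivalence classes are called dimensions and $Q/{\sim}$ is the set of them. An element $x$ is non-zero if $x\neq0\cdot x$. A unit quantity (unit element) for a class $\mathsf{C}$ is some $u\in\mathsf{C}$ such that every $x\in\mathsf{C}$ equals $\lambda\cdot u$ for some $\lambda\in K$, and such that $\lambda\cdot u=\lambda'\cdot u$ implies $\lambda=\lambda'$. *)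

theory Defs
  imports Main
begin

text \<open>A scalable monoid: the monoid structure is that of the type class
  (identity 1, product *), the scalar action of the ring 'k is the parameter sc.\<close>

definition scalable_monoid :: "('k::ring_1 \<Rightarrow> 'q::monoid_mult \<Rightarrow> 'q) \<Rightarrow> bool" where
  "scalable_monoid sc \<longleftrightarrow>
     (\<forall>x. sc 1 x = x) \<and>
     (\<forall>a b x. sc a (sc b x) = sc (a * b) x) \<and>
     (\<forall>a x y. sc a (x * y) = sc a x * y \<and> sc a (x * y) = x * sc a y)"

definition invertible_elem :: "'q::monoid_mult \<Rightarrow> bool" where
  "invertible_elem x \<longleftrightarrow> (\<exists>y. x * y = 1 \<and> y * x = 1)"

definition minv :: "'q::monoid_mult \<Rightarrow> 'q" where
  "minv x = (THE y. x * y = 1 \<and> y * x = 1)"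

definition zpow :: "'q::monoid_mult \<Rightarrow> int \<Rightarrow> 'q" where
  "zpow x k = (if 0 \<le> k then x ^ nat k else minv x ^ nat (- k))"

definition is_basis :: "('k::field \<Rightarrow> 'q::comm_monoid_mult \<Rightarrow> 'q) \<Rightarrow> 'q set \<Rightarrow> bool" where
  "is_basis sc B \<longleftrightarrow> finite B \<and> (\<forall>e\<in>B. invertible_elem e) \<and>
     (\<forall>x. \<exists>!(\<mu>, k). (\<forall>e. e \<notin> B \<longrightarrow> k e = (0::int)) \<and>
                     x = sc \<mu> (\<Prod>e\<in>B. zpow e (k e)))"

definition quantity_space :: "('k::field \<Rightarrow> 'q::comm_monoid_mult \<Rightarrow> 'q) \<Rightarrow> bool" where
  "quantity_space sc \<longleftrightarrow> scalable_monoid sc \<and> (\<exists>B. is_basis sc B)"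

definition dim_rel :: "('k::field \<Rightarrow> 'q \<Rightarrow> 'q) \<Rightarrow> ('q \<times> 'q) set" where
  "dim_rel sc = {(x, y). \<exists>a b. sc a x = sc b y}"

definition dimensions :: "('k::field \<Rightarrow> 'q \<Rightarrow> 'q) \<Rightarrow> 'q set set" where
  "dimensions sc = UNIV // dim_rel sc"

definition nonzero_q :: "('k::field \<Rightarrow> 'q \<Rightarrow> 'q) \<Rightarrow> 'q \<Rightarrow> bool" where
  "nonzero_q sc x \<longleftrightarrow> x \<noteq> sc 0 x"

definition unit_for :: "('k::field \<Rightarrow> 'q \<Rightarrow> 'q) \<Rightarrow> 'q set \<Rightarrow> 'q \<Rightarrow> bool" where
  "unit_for sc C u \<longleftrightarrow> u \<in> C \<and> (\<forall>x\<in>C. \<exists>l. x = sc l u) \<and>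
     (\<forall>l l'. sc l u = sc l' u \<longrightarrow> l = l')"

end

theory Submission
  imports Defs
begin

lemma basis_uniq:
  assumes "is_basis sc B"
    and "\<forall>e. e \<notin> B \<longrightarrow> k e = (0::int)" and "\<forall>e. e \<notin> B \<longrightarrow> k' e = (0::int)"
    and "sc m (\<Prod>e\<in>B. zpow e (k e)) = sc m' (\<Prod>e\<in>B. zpow e (k' e))"
  shows "m = m' \<and> k = k'"
proof -
  let ?x = "sc m (\<Prod>e\<in>B. zpow e (k e))"
  from assms(1) have "\<exists>!(\<mu>, k). (\<forall>e. e \<notin> B \<longrightarrow> k e = (0::int)) \<and>
                     ?x = sc \<mu> (\<Prod>e\<in>B. zpow e (k e))" unfolding is_basis_def by blast
  then obtain p where "\<forall>y. (case y of (\<mu>, k) \<Rightarrow> (\<forall>e. e \<notin> B \<longrightarrow> k e = (0::int)) \<and>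
                     ?x = sc \<mu> (\<Prod>e\<in>B. zpow e (k e))) \<longrightarrow> y = p" by (auto elim!: ex1E)
  then have "(m, k) = p" "(m', k') = p" using assms by auto
  then have "(m, k) = (m', k')" by simp
  then show ?thesis by simp
qed

theorem proposition3p8:
  fixes sc :: "'k::field \<Rightarrow> 'q::comm_monoid_mult \<Rightarrow> 'q"
  assumes "quantity_space sc"
  shows "\<forall>C\<in>dimensions sc. \<exists>u. nonzero_q sc u \<and> unit_for sc C u"
proof
  fix C assume "C \<in> dimensions sc"
  then obtain x where C: "C = dim_rel sc `` {x}" unfolding dimensions_def quotient_def by blast
  from assms obtain B where B: "is_basis sc B" and sm: "scalable_monoid sc"
    unfolding quantity_space_def by blast
  have one: "\<And>x. sc 1 x = x" and comp: "\<And>a b x. sc a (sc b x) = sc (a * b) x"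
    using sm unfolding scalable_monoid_def by auto
  define P where "P k = (\<Prod>e\<in>B. zpow e (k e))" for k
  have rep: "\<forall>y. \<exists>\<mu> k. (\<forall>e. e \<notin> B \<longrightarrow> k e = (0::int)) \<and> y = sc \<mu> (P k)"
  proof
    fix y
    from B have "\<exists>!(\<mu>, k). (\<forall>e. e \<notin> B \<longrightarrow> k e = (0::int)) \<and> y = sc \<mu> (P k)"
      unfolding is_basis_def P_def by blast
    then obtain p where "case p of (\<mu>, k) \<Rightarrow> (\<forall>e. e \<notin> B \<longrightarrow> k e = (0::int)) \<and> y = sc \<mu> (P k)"
      by (auto elim!: ex1E)
    then show "\<exists>\<mu> k. (\<forall>e. e \<notin> B \<longrightarrow> k e = (0::int)) \<and> y = sc \<mu> (P k)"
      by (cases p) auto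
  qed
  have uq: "\<And>k k' m m'. \<forall>e. e \<notin> B \<longrightarrow> k e = (0::int) \<Longrightarrow> \<forall>e. e \<notin> B \<longrightarrow> k' e = 0 \<Longrightarrow>
      sc m (P k) = sc m' (P k') \<Longrightarrow> m = m' \<and> k = k'"
    using basis_uniq[OF B] unfolding P_def by blast
  from rep obtain \<mu> k where k0: "\<forall>e. e \<notin> B \<longrightarrow> k e = (0::int)" and x: "x = sc \<mu> (P k)" by blast
  show "\<exists>u. nonzero_q sc u \<and> unit_for sc C u"
  proof (intro exI conjI)
    show "nonzero_q sc (P k)" unfolding nonzero_q_def
    proof
      assume "P k = sc 0 (P k)"
      then have "sc 1 (P k) = sc 0 (P k)" by (simp add: one)
      then have "(1::'k) = 0" using uq[OF k0 k0] by blast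
      then show False by simp
    qed
    show "unit_for sc C (P k)" unfolding unit_for_def
    proof (intro conjI ballI allI impI)
      show "P k \<in> C" unfolding C dim_rel_def using x one by auto
    next
      fix y assume "y \<in> C"
      then obtain a b where ab: "sc a x = sc b y" unfolding C dim_rel_def by auto
      from rep obtain \<nu> k' where k'0: "\<forall>e. e \<notin> B \<longrightarrow> k' e = (0::int)" and y: "y = sc \<nu> (P k')" by blast
      have "sc (a*\<mu>) (P k) = sc (b*\<nu>) (P k')" using ab x y comp by simp
      then have "k = k'" using uq[OF k0 k'0] by blast
      then show "\<exists>l. y = sc l (P k)" using y by blast
    next
      fix l l' assume "sc l (P k) = sc l' (P k)"
      then show "l = l'" using uq[OF k0 k0] by blast
    qed
  qed
qed

end
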